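(* Let ${\bf X}_{\text{PROS}}=\{X_{[d_j]i}\}$ be a $\text{PROS}_{\boldsymbol{\alpha}}(n,L,s,D)$ sample of size $N=nL$ from a density $f$, let $K$ be a kernel as in the context and $h>0$ a bandwidth, and define $$\hat{f}_{\text{PROS}}(x)=\frac{1}{nLh}\sum_{i=1}^L\sum_{j=1}^n K\Big(\frac{x-X_{[d_j]i}}{h}\Big),\qquad \hat{f}_{\text{SRS}}(x)=\frac{1}{Nh}\sum_{k=1}^N K\Big(\frac{x-X_k}{h}\Big),$$ where $X_1,\dots,X_N$ are i.i.d. with density $f$. Then: (i) $\mathbb{E}[\hat{f}_{\text{PROS}}(x)]=\mathbb{E}[\hat{f}_{\text{SRS}}(x)]$; (ii) $\mathrm{var}(\hat{f}_{\text{PROS}}(x))=\mathrm{var}(\hat{f}_{\text{SRS}}(x))-\frac{1}{Nn}\sum_{j=1}^n(\mu_{K[d_j]}-\mu_K)^2$, where $\mu_{K[d_j]}=\mathbb{E}\big[\frac1hK\big(\frac{x-X_{[d_j]}}{h}\big)\big]$ and $\mu_K=\mathbb{E}\big[\frac1hK\big(\frac{x-X}{h}\big)\big]$, with $X_{[d_j]}$ having density $f_{[d_j]}$ and $X$ having density $f$; (iii) for fixed $x$, $\hat{f}_{\text{PROS}}(x)$ is asymptotically normally distributed with mean $\mathbb{E}[\hat{f}_{\text{PROS}}(x)]$ and variance $\mathrm{var}(\hat{f}_{\text{PROS}}(x))$ for large $L$.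
   Context: Let $f$ be a density with cdf $F$. Fix positive integers $s,n,L$ with $m=s/n$ an integer, and $D=\{d_1,\dots,d_n\}$ with $d_j=\{(j-1)m+1,\dots,jm\}$. Let $\boldsymbol{\alpha}=(\alpha_{d_j,d_h})$ be an $n\times n$ doubly stochastic matrix of misplacement probabilities. For $u=1,\dots,s$, $f_{(u:s)}(x)=\frac{s!}{(u-1)!(s-u)!}F(x)^{u-1}(1-F(x))^{s-u}f(x)$. A $\text{PROS}_{\boldsymbol{\alpha}}(n,L,s,D)$ sample (partially rank-ordered set sample with subsetting errors $\boldsymbol\alpha$) is a family of independent random variables $X_{[d_j]i}$, $j=1,\dots,n$, $i=1,\dots,L$, where $X_{[d_j]i}$ has density $f_{[d_j]}(x)=\frac1m\sum_{h=1}^n\sum_{u\in d_h}\alpha_{d_j,d_h}f_{(u:s)}(x)$. The kernel $K$ is a symmetric second-order kernel with $\int K=1$, $\int K^2<\infty$, $\int x^2K(x)dx<\infty$. *)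

theory Defs
  imports "HOL-Probability.Probability"
begin

definition cdf_of :: "(real \<Rightarrow> real) \<Rightarrow> real \<Rightarrow> real" where
  "cdf_of f x = (LINT t:{..x}|lborel. f t)"

definition ord_stat_density :: "(real \<Rightarrow> real) \<Rightarrow> nat \<Rightarrow> nat \<Rightarrow> real \<Rightarrow> real" where
  "ord_stat_density f s u x =
     fact s / (fact (u - 1) * fact (s - u)) * (cdf_of f x) ^ (u - 1) * (1 - cdf_of f x) ^ (s - u) * f x"

definition subset_d :: "nat \<Rightarrow> nat \<Rightarrow> nat set" where
  "subset_d m j = {(j - 1) * m + 1 .. j * m}"

definition doubly_stochastic :: "nat \<Rightarrow> (nat \<Rightarrow> nat \<Rightarrow> real) \<Rightarrow> bool" where
  "doubly_stochastic n a \<longleftrightarrow>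
     (\<forall>j\<in>{1..n}. \<forall>h\<in>{1..n}. 0 \<le> a j h) \<and>
     (\<forall>j\<in>{1..n}. (\<Sum>h=1..n. a j h) = 1) \<and>
     (\<forall>h\<in>{1..n}. (\<Sum>j=1..n. a j h) = 1)"

definition pros_density ::
  "(real \<Rightarrow> real) \<Rightarrow> nat \<Rightarrow> nat \<Rightarrow> (nat \<Rightarrow> nat \<Rightarrow> real) \<Rightarrow> nat \<Rightarrow> real \<Rightarrow> real" where
  "pros_density f s n a j x =
     (let m = s div n in
      (1 / real m) * (\<Sum>h=1..n. \<Sum>u\<in>subset_d m h. a j h * ord_stat_density f s u x))"

definition expect :: "'a measure \<Rightarrow> ('a \<Rightarrow> real) \<Rightarrow> real" where
  "expect M Z = integral\<^sup>L M Z"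

definition var :: "'a measure \<Rightarrow> ('a \<Rightarrow> real) \<Rightarrow> real" where
  "var M Z = expect M (\<lambda>\<omega>. (Z \<omega> - expect M Z)\<^sup>2)"

text \<open>PROS kernel density estimator; X j i is X_[d_j]i.\<close>
definition fhat_pros ::
  "(real \<Rightarrow> real) \<Rightarrow> real \<Rightarrow> nat \<Rightarrow> nat \<Rightarrow> (nat \<Rightarrow> nat \<Rightarrow> 'a \<Rightarrow> real) \<Rightarrow> real \<Rightarrow> 'a \<Rightarrow> real" where
  "fhat_pros K h n L X x \<omega> =
     1 / (real n * real L * h) * (\<Sum>i=1..L. \<Sum>j=1..n. K ((x - X j i \<omega>) / h))"

definition fhat_srs ::
  "(real \<Rightarrow> real) \<Rightarrow> real \<Rightarrow> nat \<Rightarrow> (nat \<Rightarrow> 'a \<Rightarrow> real) \<Rightarrow> real \<Rightarrow> 'a \<Rightarrow> real" where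
  "fhat_srs K h N Y x \<omega> = 1 / (real N * h) * (\<Sum>k=1..N. K ((x - Y k \<omega>) / h))"

end

theory Submission
  imports Defs
begin


lemma cdf_bounds:
  assumes f_meas: "f \<in> borel_measurable lborel" and f_nonneg: "\<And>t. 0 \<le> f t"
    and f_int: "integrable lborel f" and f_one: "(LINT t|lborel. f t) = 1"
  shows "0 \<le> cdf_of f y" "cdf_of f y \<le> 1"
proof -
  have si: "set_integrable lborel {..y} f"
    unfolding set_integrable_def by (rule integrable_mult_indicator) (auto simp: f_int)
  show "0 \<le> cdf_of f y" unfolding cdf_of_def set_lebesgue_integral_def
    by (rule Bochner_Integration.integral_nonneg) (auto simp: f_nonneg)
  have "cdf_of f y = (LINT t|lborel. indicator {..y} t * f t)"
    unfolding cdf_of_def set_lebesgue_integral_def by simp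
  also have "\<dots> \<le> (LINT t|lborel. f t)"
    using si unfolding set_integrable_def
    by (intro integral_mono) (auto simp: f_int f_nonneg indicator_def)
  finally show "cdf_of f y \<le> 1" using f_one by simp
qed

lemma sum_subset_d:
  "(\<Sum>h=1..n. \<Sum>u\<in>subset_d m h. \<phi> u) = (\<Sum>u=1..n*m. (\<phi> u :: real))"
proof (induction n)
  case 0 then show ?case by simp
next
  case (Suc n)
  have "(\<Sum>u=1..Suc n*m. \<phi> u) = (\<Sum>u=1..n*m + m. \<phi> u)" by (simp add: add.commute)
  also have "\<dots> = (\<Sum>u=1..n*m. \<phi> u) + (\<Sum>u=n*m+1..n*m + m. \<phi> u)"
    by (rule sum.ub_add_nat) simp
  finally show ?case using Suc by (simp add: subset_d_def add.commute)
qed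

lemma ord_stat_sum:
  assumes "0 < s"
  shows "(\<Sum>u=1..s. ord_stat_density f s u y) = real s * f y"
proof -
  define F where "F = cdf_of f y"
  obtain r where s: "s = Suc r" using assms by (cases s) auto
  have "(\<Sum>u=1..s. ord_stat_density f s u y) = (\<Sum>k=0..r. ord_stat_density f s (Suc k) y)"
    unfolding s using sum.shift_bounds_cl_Suc_ivl[of "\<lambda>u. ord_stat_density f (Suc r) u y" 0 r] by simp
  also have "\<dots> = (\<Sum>k=0..r. real s * (real (r choose k) * F ^ k * (1 - F) ^ (r - k)) * f y)"
  proof (rule sum.cong[OF refl])
    fix k assume k: "k \<in> {0..r}"
    have "real (r choose k) = fact r / (fact k * fact (r - k))"
      using k by (simp add: binomial_fact)
    moreover have "(fact s :: real) = real s * fact r" unfolding s by simp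
    ultimately show "ord_stat_density f s (Suc k) y = real s * (real (r choose k) * F ^ k * (1 - F) ^ (r - k)) * f y"
      unfolding ord_stat_density_def F_def s by simp
  qed
  also have "\<dots> = real s * (\<Sum>k=0..r. real (r choose k) * F ^ k * (1 - F) ^ (r - k)) * f y"
    by (simp add: sum_distrib_left sum_distrib_right mult.assoc)
  also have "(\<Sum>k=0..r. real (r choose k) * F ^ k * (1 - F) ^ (r - k)) = (F + (1 - F)) ^ r"
    using binomial_ring[of F "1 - F" r] by (simp add: atLeast0AtMost mult.commute mult.left_commute)
  finally show ?thesis by simp
qed

context
  fixes f :: "real \<Rightarrow> real" and s n :: nat and a :: "nat \<Rightarrow> nat \<Rightarrow> real"
  assumes f_meas: "f \<in> borel_measurable lborel"
    and f_nonneg: "\<And>t. 0 \<le> f t"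
    and f_int: "integrable lborel f"
    and f_one: "(LINT t|lborel. f t) = 1"
    and s_pos: "0 < s" and n_pos: "0 < n" and n_dvd: "n dvd s"
    and alpha: "doubly_stochastic n a"
begin

lemma cdf_mono: "mono (cdf_of f)"
proof
  fix x y :: real assume "x \<le> y"
  have si: "integrable lborel (\<lambda>t. indicator {..z} t * f t)" for z
    using integrable_mult_indicator[of "{..z}" lborel f] f_int by simp
  have "cdf_of f x = (LINT t|lborel. indicator {..x} t * f t)"
    unfolding cdf_of_def set_lebesgue_integral_def by simp
  also have "\<dots> \<le> (LINT t|lborel. indicator {..y} t * f t)"
    using \<open>x \<le> y\<close> by (intro integral_mono si) (auto simp: f_nonneg indicator_def)
  also have "\<dots> = cdf_of f y"
    unfolding cdf_of_def set_lebesgue_integral_def by simp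
  finally show "cdf_of f x \<le> cdf_of f y" .
qed

lemma ord_nonneg: "0 \<le> ord_stat_density f s u t"
  unfolding ord_stat_density_def
  using cdf_bounds[OF f_meas f_nonneg f_int f_one, of t] f_nonneg[of t] by simp

lemma ord_meas[measurable]: "(\<lambda>t. ord_stat_density f s u t) \<in> borel_measurable borel"
proof -
  have [measurable]: "cdf_of f \<in> borel_measurable borel" by (rule borel_measurable_mono[OF cdf_mono])
  have [measurable]: "f \<in> borel_measurable borel" using f_meas by simp
  show ?thesis unfolding ord_stat_density_def by measurable
qed

lemma g_meas[measurable]: "(\<lambda>t. pros_density f s n a j t) \<in> borel_measurable borel"
  unfolding pros_density_def Let_def by measurable

lemma g_nonneg: "j \<in> {1..n} \<Longrightarrow> 0 \<le> pros_density f s n a j t"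
  using alpha ord_nonneg unfolding pros_density_def Let_def doubly_stochastic_def
  by (auto intro!: divide_nonneg_nonneg sum_nonneg mult_nonneg_nonneg)

lemma g_sum: "(\<Sum>j=1..n. pros_density f s n a j t) = real n * f t"
proof -
  define m where "m = s div n"
  have s_eq: "s = n * m" using n_dvd unfolding m_def by simp
  have m_pos: "0 < m" using s_pos s_eq by (cases m) auto
  have "(\<Sum>j=1..n. pros_density f s n a j t) =
      (1 / real m) * (\<Sum>j=1..n. \<Sum>h=1..n. \<Sum>u\<in>subset_d m h. a j h * ord_stat_density f s u t)"
    unfolding pros_density_def Let_def m_def[symmetric] by (simp add: sum_distrib_left)
  also have "(\<Sum>j=1..n. \<Sum>h=1..n. \<Sum>u\<in>subset_d m h. a j h * ord_stat_density f s u t)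
     = (\<Sum>h=1..n. \<Sum>j=1..n. \<Sum>u\<in>subset_d m h. a j h * ord_stat_density f s u t)"
    by (rule sum.swap)
  also have "\<dots> = (\<Sum>h=1..n. \<Sum>u\<in>subset_d m h. \<Sum>j=1..n. a j h * ord_stat_density f s u t)"
    by (intro sum.cong refl sum.swap)
  also have "\<dots> = (\<Sum>h=1..n. \<Sum>u\<in>subset_d m h. (\<Sum>j=1..n. a j h) * ord_stat_density f s u t)"
    by (simp add: sum_distrib_right)
  also have "\<dots> = (\<Sum>h=1..n. \<Sum>u\<in>subset_d m h. ord_stat_density f s u t)"
    using alpha unfolding doubly_stochastic_def by simp
  also have "\<dots> = (\<Sum>u=1..s. ord_stat_density f s u t)"
    using sum_subset_d[of "\<lambda>u. ord_stat_density f s u t" m n] s_eq by simp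
  finally have "(\<Sum>j=1..n. pros_density f s n a j t) = (1 / real m) * (\<Sum>u=1..s. ord_stat_density f s u t)" .
  also have "\<dots> = real n * f t"
    using ord_stat_sum[OF s_pos] m_pos by (simp add: s_eq)
  finally show ?thesis .
qed

lemma g_le: "j \<in> {1..n} \<Longrightarrow> pros_density f s n a j t \<le> real n * f t"
  unfolding g_sum[symmetric, of t]
  by (rule member_le_sum) (auto intro: g_nonneg)

end

lemma (in prob_space) var_sum_indep:
  fixes V :: "'i \<Rightarrow> 'a \<Rightarrow> real"
  assumes "finite I" "indep_vars (\<lambda>_. borel) V I"
    and "\<And>i. i\<in>I \<Longrightarrow> integrable M (V i)"
    and "\<And>i. i\<in>I \<Longrightarrow> integrable M (\<lambda>\<omega>. (V i \<omega>)\<^sup>2)"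
    and "\<And>i. i\<in>I \<Longrightarrow> expectation (V i) = 0"
  shows "integrable M (\<lambda>\<omega>. (\<Sum>i\<in>I. V i \<omega>)\<^sup>2) \<and>
    expectation (\<lambda>\<omega>. (\<Sum>i\<in>I. V i \<omega>)\<^sup>2) = (\<Sum>i\<in>I. expectation (\<lambda>\<omega>. (V i \<omega>)\<^sup>2))"
  using assms
proof (induction I rule: finite_induct)
  case empty then show ?case by simp
next
  case (insert y F)
  have indF: "indep_vars (\<lambda>_. borel) V F"
    using indep_vars_subset[OF insert.prems(1)] by auto
  note IH = insert.IH[OF indF insert.prems(2-4)]
  have iv: "indep_var borel (V y) borel (\<lambda>\<omega>. \<Sum>i\<in>F. V i \<omega>)"
    by (rule indep_vars_sum[OF insert.hyps(1,2) insert.prems(1)])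
  have intS: "integrable M (\<lambda>\<omega>. \<Sum>i\<in>F. V i \<omega>)"
    using insert.prems(2) by auto
  have ES: "expectation (\<lambda>\<omega>. \<Sum>i\<in>F. V i \<omega>) = 0"
    using insert.prems(2,4) by (simp add: Bochner_Integration.integral_sum)
  have intY: "integrable M (V y)" "integrable M (\<lambda>\<omega>. (V y \<omega>)\<^sup>2)" "expectation (V y) = 0"
    using insert.prems(2-4) by auto
  have intP: "integrable M (\<lambda>\<omega>. V y \<omega> * (\<Sum>i\<in>F. V i \<omega>))"
    by (rule indep_var_integrable[OF iv intY(1) intS])
  have EP: "expectation (\<lambda>\<omega>. V y \<omega> * (\<Sum>i\<in>F. V i \<omega>)) = 0"
    using indep_var_lebesgue_integral[OF iv intY(1) intS] intY(3) by simp
  have eq: "(\<lambda>\<omega>. (\<Sum>i\<in>insert y F. V i \<omega>)\<^sup>2) =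
     (\<lambda>\<omega>. (V y \<omega>)\<^sup>2 + 2 * (V y \<omega> * (\<Sum>i\<in>F. V i \<omega>)) + (\<Sum>i\<in>F. V i \<omega>)\<^sup>2)"
    using insert.hyps by (auto simp: power2_sum)
  have int2: "integrable M (\<lambda>\<omega>. (\<Sum>i\<in>insert y F. V i \<omega>)\<^sup>2)"
    unfolding eq using intY intP IH by auto
  have "expectation (\<lambda>\<omega>. (\<Sum>i\<in>insert y F. V i \<omega>)\<^sup>2) =
     expectation (\<lambda>\<omega>. (V y \<omega>)\<^sup>2) + 2 * expectation (\<lambda>\<omega>. V y \<omega> * (\<Sum>i\<in>F. V i \<omega>))
      + expectation (\<lambda>\<omega>. (\<Sum>i\<in>F. V i \<omega>)\<^sup>2)"
    unfolding eq using intY intP IH by simp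
  then show ?case using int2 EP IH insert.hyps by simp
qed



lemma clt_char:
  fixes \<mu> :: "real measure" and \<sigma> :: real and N :: "nat \<Rightarrow> real measure"
  assumes \<mu>_rd: "real_distribution \<mu>"
    and \<mu>_integrable: "integrable \<mu> (\<lambda>x. x)"
    and \<mu>_mean: "(\<integral>x. x \<partial>\<mu>) = 0"
    and \<mu>_square_integrable: "integrable \<mu> (\<lambda>x. x^2)"
    and \<mu>_variance: "(\<integral>x. x^2 \<partial>\<mu>) = \<sigma>\<^sup>2"
    and \<sigma>_pos: "\<sigma> > 0"
    and N_rd: "\<And>n. real_distribution (N n)"
    and N_char: "\<And>n t. n \<ge> 1 \<Longrightarrow> char (N n) t = (char \<mu> (t / sqrt (\<sigma>\<^sup>2 * n)))^n"
  shows "weak_conv_m N std_normal_distribution"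
proof -
  interpret \<mu>: real_distribution \<mu> by fact
  define \<phi> where "\<phi> n = char (N n)" for n
  define \<psi> where "\<psi> n t = char \<mu> (t / sqrt (\<sigma>\<^sup>2 * n))" for n t

  have main: "\<forall>\<^sub>F n in sequentially.
      cmod (\<phi> n t - (1 + (-(t^2) / 2) / n)^n) \<le>
      t\<^sup>2 / (6 * \<sigma>\<^sup>2) * (LINT x|\<mu>. min (6 * x\<^sup>2) (\<bar>t / sqrt (\<sigma>\<^sup>2 * n)\<bar> * \<bar>x\<bar> ^ 3))" for t
  proof (rule eventually_sequentiallyI)
    fix n :: nat
    assume "n \<ge> max 1 (nat (ceiling (t^2 / 4)))"
    hence n: "n \<ge> t^2 / 4" and n1: "n \<ge> 1" by (auto simp flip: nat_ceiling_le_eq)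
    let ?t = "t / sqrt (\<sigma>\<^sup>2 * n)"
    have \<phi>_eq: "\<phi> n t =(\<psi> n t)^n"
      unfolding \<phi>_def \<psi>_def using N_char[OF n1] by simp
    have "norm (\<psi> n t - (1 - ?t^2 * \<sigma>\<^sup>2 / 2)) \<le> ?t\<^sup>2 / 6 * (LINT x|\<mu>. min (6 * x\<^sup>2) (\<bar>?t\<bar> * \<bar>x\<bar> ^ 3))"
      unfolding \<psi>_def by (rule \<mu>.char_approx3, auto simp: \<mu>_integrable \<mu>_mean \<mu>_square_integrable \<mu>_variance)
    also have "?t^2 * \<sigma>\<^sup>2 = t^2 / n"
      using \<sigma>_pos by (simp add: power_divide)
    also have "t^2 / n / 2 = (t^2 / 2) / n"
      by simp
    finally have **: "norm (\<psi> n t - (1 + (-(t^2) / 2) / n)) \<le>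
      ?t\<^sup>2 / 6 * (LINT x|\<mu>. min (6 * x\<^sup>2) (\<bar>?t\<bar> * \<bar>x\<bar> ^ 3))" by simp

    have "norm (\<phi> n t - (complex_of_real (1 + (-(t^2) / 2) / n))^n) \<le>
         n * norm (\<psi> n t - (complex_of_real (1 + (-(t^2) / 2) / n)))"
      using n
      by (auto intro!: norm_power_diff \<mu>.cmod_char_le_1 abs_leI
               simp del: of_real_diff simp: of_real_diff[symmetric] divide_le_eq \<phi>_eq \<psi>_def)
    also have "\<dots> \<le> n * (?t\<^sup>2 / 6 * (LINT x|\<mu>. min (6 * x\<^sup>2) (\<bar>?t\<bar> * \<bar>x\<bar> ^ 3)))"
      by (rule mult_left_mono [OF **], simp)
    also have "\<dots> = (t\<^sup>2 / (6 * \<sigma>\<^sup>2) * (LINT x|\<mu>. min (6 * x\<^sup>2) (\<bar>?t\<bar> * \<bar>x\<bar> ^ 3)))"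
      using \<sigma>_pos n1 by (simp add: field_simps min_absorb2)
    finally show "norm (\<phi> n t - (1 + (-(t^2) / 2) / n)^n) \<le>
        (t\<^sup>2 / (6 * \<sigma>\<^sup>2) * (LINT x|\<mu>. min (6 * x\<^sup>2) (\<bar>?t\<bar> * \<bar>x\<bar> ^ 3)))"
      by simp
  qed

  show ?thesis
  proof (rule levy_continuity)
    fix t
    let ?t = "\<lambda>n. t / sqrt (\<sigma>\<^sup>2 * n)"
    have "\<And>x. (\<lambda>n. min (6 * x\<^sup>2) (\<bar>t\<bar> * \<bar>x\<bar> ^ 3 / \<bar>sqrt (\<sigma>\<^sup>2 * real n)\<bar>)) \<longlonglongrightarrow> 0"
      using \<sigma>_pos
      by (auto simp: real_sqrt_mult min_absorb2
               intro!: tendsto_min[THEN tendsto_eq_rhs] sqrt_at_top[THEN filterlim_compose]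
                       filterlim_tendsto_pos_mult_at_top filterlim_at_top_imp_at_infinity
                       tendsto_divide_0 filterlim_real_sequentially)
    then have "(\<lambda>n. LINT x|\<mu>. min (6 * x\<^sup>2) (\<bar>?t n\<bar> * \<bar>x\<bar> ^ 3)) \<longlonglongrightarrow> (LINT x|\<mu>. 0)"
      by (intro integral_dominated_convergence [where w = "\<lambda>x. 6 * x^2"]) (auto simp: \<mu>_square_integrable)
    then have *: "(\<lambda>n. t\<^sup>2 / (6 * \<sigma>\<^sup>2) * (LINT x|\<mu>. min (6 * x\<^sup>2) (\<bar>?t n\<bar> * \<bar>x\<bar> ^ 3))) \<longlonglongrightarrow> 0"
      by (simp only: integral_zero tendsto_mult_right_zero)

    have "(\<lambda>n. complex_of_real ((1 + (-(t^2) / 2) / n)^n)) \<longlonglongrightarrow> complex_of_real (exp (-(t^2) / 2))"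
      by (rule isCont_tendsto_compose [OF _ tendsto_exp_limit_sequentially]) auto
    then have "(\<lambda>n. \<phi> n t) \<longlonglongrightarrow> complex_of_real (exp (-(t^2) / 2))"
      by (rule Lim_transform) (rule Lim_null_comparison [OF main *])
    then show "(\<lambda>n. char (N n) t) \<longlonglongrightarrow> char std_normal_distribution t"
      by (simp add: \<phi>_def char_std_normal_distribution)
  qed (auto intro!: real_dist_normal_dist N_rd)
qed



locale pros_setting =
  fixes f K :: "real \<Rightarrow> real"
    and s n :: nat and a :: "nat \<Rightarrow> nat \<Rightarrow> real"
    and h x :: real
    and M :: "nat \<Rightarrow> 'a measure" and X :: "nat \<Rightarrow> nat \<Rightarrow> nat \<Rightarrow> 'a \<Rightarrow> real"
    and M' :: "nat \<Rightarrow> 'b measure" and Y :: "nat \<Rightarrow> nat \<Rightarrow> 'b \<Rightarrow> real"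
  assumes f_meas: "f \<in> borel_measurable lborel"
    and f_nonneg: "\<And>t. 0 \<le> f t"
    and f_int: "integrable lborel f"
    and f_one: "(LINT t|lborel. f t) = 1"
    and s_pos: "0 < s" and n_pos: "0 < n" and n_dvd: "n dvd s"
    and alpha: "doubly_stochastic n a"
    and K_int: "integrable lborel K"
    and h_pos: "0 < h"
    and var_fin: "integrable lborel (\<lambda>t. (K ((x - t) / h))\<^sup>2 * f t)"
    and M_prob: "\<And>L. prob_space (M L)"
    and X_indep: "\<And>L. prob_space.indep_vars (M L) (\<lambda>_. borel) (\<lambda>(j, i). X L j i) ({1..n} \<times> {1..L})"
    and X_distr: "\<And>L j i. j \<in> {1..n} \<Longrightarrow> i \<in> {1..L} \<Longrightarrow>
        distributed (M L) lborel (X L j i) (\<lambda>t. ennreal (pros_density f s n a j t))"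
    and M'_prob: "\<And>L. prob_space (M' L)"
    and Y_indep: "\<And>L. prob_space.indep_vars (M' L) (\<lambda>_. borel) (Y L) {1..n * L}"
    and Y_distr: "\<And>L k. k \<in> {1..n * L} \<Longrightarrow> distributed (M' L) lborel (Y L k) (\<lambda>t. ennreal (f t))"
begin

definition "kk t = K ((x - t) / h)"
definition "g j = pros_density f s n a j"
definition "B j = (LINT t|lborel. g j t * kk t)"
definition "A j = (LINT t|lborel. g j t * (kk t)\<^sup>2)"
definition "B0 = (LINT t|lborel. f t * kk t)"
definition "A0 = (LINT t|lborel. f t * (kk t)\<^sup>2)"

lemma K_meas[measurable]: "K \<in> borel_measurable borel"
  using borel_measurable_integrable[OF K_int] by simp

lemma kk_meas[measurable]: "kk \<in> borel_measurable borel"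
  unfolding kk_def by measurable

lemma f_meas'[measurable]: "f \<in> borel_measurable borel"
  using f_meas by simp

lemma g_meas'[measurable]: "g j \<in> borel_measurable borel"
  unfolding g_def using g_meas[OF f_meas f_nonneg f_int f_one s_pos n_pos n_dvd alpha] by simp

lemma g_nonneg': "j \<in> {1..n} \<Longrightarrow> 0 \<le> g j t"
  unfolding g_def using g_nonneg[OF f_meas f_nonneg f_int f_one s_pos n_pos n_dvd alpha] by simp

lemma g_le': "j \<in> {1..n} \<Longrightarrow> g j t \<le> real n * f t"
  unfolding g_def using g_le[OF f_meas f_nonneg f_int f_one s_pos n_pos n_dvd alpha] by simp

lemma g_sum': "(\<Sum>j=1..n. g j t) = real n * f t"
  unfolding g_def using g_sum[OF f_meas f_nonneg f_int f_one s_pos n_pos n_dvd alpha] by simp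

lemma int_fk2: "integrable lborel (\<lambda>t. f t * (kk t)\<^sup>2)"
  using var_fin unfolding kk_def by (simp add: mult.commute)

lemma int_fk: "integrable lborel (\<lambda>t. f t * kk t)"
proof (rule Bochner_Integration.integrable_bound[where f="\<lambda>t. f t + f t * (kk t)\<^sup>2"])
  show "integrable lborel (\<lambda>t. f t + f t * (kk t)\<^sup>2)" using f_int int_fk2 by simp
  show "(\<lambda>t. f t * kk t) \<in> borel_measurable lborel" by simp
  show "AE t in lborel. norm (f t * kk t) \<le> norm (f t + f t * (kk t)\<^sup>2)"
  proof (rule AE_I2)
    fix t
    have sq: "0 \<le> (\<bar>kk t\<bar> - 1)\<^sup>2" by simp
    have "(\<bar>kk t\<bar>)\<^sup>2 = (kk t)\<^sup>2" by simp
    then have "\<bar>kk t\<bar> \<le> 1 + (kk t)\<^sup>2" using sq unfolding power2_diff by simp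
    then have "f t * \<bar>kk t\<bar> \<le> f t * (1 + (kk t)\<^sup>2)" using f_nonneg[of t] by (rule mult_left_mono)
    then show "norm (f t * kk t) \<le> norm (f t + f t * (kk t)\<^sup>2)"
      using f_nonneg[of t] by (simp add: abs_mult algebra_simps)
  qed
qed

lemma int_gk: "j \<in> {1..n} \<Longrightarrow> integrable lborel (\<lambda>t. g j t * kk t)"
proof (rule Bochner_Integration.integrable_bound[where f="\<lambda>t. real n * (f t * kk t)"])
  assume j: "j \<in> {1..n}"
  show "integrable lborel (\<lambda>t. real n * (f t * kk t))" using int_fk by simp
  show "(\<lambda>t. g j t * kk t) \<in> borel_measurable lborel" by simp
  show "AE t in lborel. norm (g j t * kk t) \<le> norm (real n * (f t * kk t))"
    using g_le'[OF j] g_nonneg'[OF j] f_nonneg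
    by (intro AE_I2) (auto simp: abs_mult mult.assoc[symmetric] intro!: mult_right_mono)
qed

lemma int_gk2: "j \<in> {1..n} \<Longrightarrow> integrable lborel (\<lambda>t. g j t * (kk t)\<^sup>2)"
proof (rule Bochner_Integration.integrable_bound[where f="\<lambda>t. real n * (f t * (kk t)\<^sup>2)"])
  assume j: "j \<in> {1..n}"
  show "integrable lborel (\<lambda>t. real n * (f t * (kk t)\<^sup>2))" using int_fk2 by simp
  show "(\<lambda>t. g j t * (kk t)\<^sup>2) \<in> borel_measurable lborel" by simp
  show "AE t in lborel. norm (g j t * (kk t)\<^sup>2) \<le> norm (real n * (f t * (kk t)\<^sup>2))"
    using g_le'[OF j] g_nonneg'[OF j] f_nonneg
    by (intro AE_I2) (auto simp: abs_mult mult.assoc[symmetric] intro!: mult_right_mono)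
qed

lemma sumB: "(\<Sum>j=1..n. B j) = real n * B0"
proof -
  have "(\<Sum>j=1..n. B j) = (LINT t|lborel. (\<Sum>j=1..n. g j t * kk t))"
    unfolding B_def by (rule Bochner_Integration.integral_sum[symmetric]) (auto intro: int_gk)
  also have "\<dots> = (LINT t|lborel. real n * (f t * kk t))"
    by (intro Bochner_Integration.integral_cong refl) (simp add: sum_distrib_right[symmetric] g_sum'[simplified])
  finally show ?thesis unfolding B0_def using integral_mult_right_zero[of lborel "real n" "\<lambda>t. f t * kk t"] by (simp add: mult.assoc)
qed

lemma sumA: "(\<Sum>j=1..n. A j) = real n * A0"
proof -
  have "(\<Sum>j=1..n. A j) = (LINT t|lborel. (\<Sum>j=1..n. g j t * (kk t)\<^sup>2))"
    unfolding A_def by (rule Bochner_Integration.integral_sum[symmetric]) (auto intro: int_gk2)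
  also have "\<dots> = (LINT t|lborel. real n * (f t * (kk t)\<^sup>2))"
    by (intro Bochner_Integration.integral_cong refl) (simp add: sum_distrib_right[symmetric] g_sum'[simplified])
  finally show ?thesis unfolding A0_def using integral_mult_right_zero[of lborel "real n" "\<lambda>t. f t * (kk t)\<^sup>2"] by (simp add: mult.assoc)
qed

definition "IL (L::nat) = {1..n} \<times> {1..L}"
definition "V L p \<omega> = kk (X L (fst p) (snd p) \<omega>) - B (fst p)"
definition "\<sigma>2 = (\<Sum>j=1..n. A j - (B j)\<^sup>2)"

lemma finite_IL[simp]: "finite (IL L)" unfolding IL_def by (intro finite_cartesian_product) auto

lemma X_rv[measurable]: "j \<in> {1..n} \<Longrightarrow> i \<in> {1..L} \<Longrightarrow> X L j i \<in> borel_measurable (M L)"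
  using X_distr[of j i L] unfolding distributed_def by simp

lemma W_facts:
  assumes j: "j \<in> {1..n}" and i: "i \<in> {1..L}"
  shows "integrable (M L) (\<lambda>\<omega>. kk (X L j i \<omega>))"
    "(\<integral>\<omega>. kk (X L j i \<omega>) \<partial>M L) = B j"
    "integrable (M L) (\<lambda>\<omega>. (kk (X L j i \<omega>))\<^sup>2)"
    "(\<integral>\<omega>. (kk (X L j i \<omega>))\<^sup>2 \<partial>M L) = A j"
proof -
  have D: "distributed (M L) lborel (X L j i) (\<lambda>t. ennreal (g j t))"
    using X_distr[OF j i] unfolding g_def .
  have nn: "\<And>t. t \<in> space lborel \<Longrightarrow> 0 \<le> g j t" using g_nonneg'[OF j] by simp
  show "integrable (M L) (\<lambda>\<omega>. kk (X L j i \<omega>))"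
    using distributed_integrable[OF D _ nn, of kk] int_gk[OF j] by simp
  show "(\<integral>\<omega>. kk (X L j i \<omega>) \<partial>M L) = B j"
    using distributed_integral[OF D _ nn, of kk] unfolding B_def by simp
  show "integrable (M L) (\<lambda>\<omega>. (kk (X L j i \<omega>))\<^sup>2)"
    using distributed_integrable[OF D _ nn, of "\<lambda>t. (kk t)\<^sup>2"] int_gk2[OF j] by simp
  show "(\<integral>\<omega>. (kk (X L j i \<omega>))\<^sup>2 \<partial>M L) = A j"
    using distributed_integral[OF D _ nn, of "\<lambda>t. (kk t)\<^sup>2"] unfolding A_def by simp
qed

lemma V_facts:
  assumes p: "p \<in> IL L"
  shows "integrable (M L) (V L p)" "(\<integral>\<omega>. V L p \<omega> \<partial>M L) = 0"
    "integrable (M L) (\<lambda>\<omega>. (V L p \<omega>)\<^sup>2)"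
    "(\<integral>\<omega>. (V L p \<omega>)\<^sup>2 \<partial>M L) = A (fst p) - (B (fst p))\<^sup>2"
proof -
  interpret prob_space "M L" by (rule M_prob)
  have j: "fst p \<in> {1..n}" and i: "snd p \<in> {1..L}" using p unfolding IL_def by auto
  note W = W_facts[OF j i]
  show "integrable (M L) (V L p)" unfolding V_def[abs_def] using W by simp
  show "(\<integral>\<omega>. V L p \<omega> \<partial>M L) = 0" unfolding V_def using W by (simp add: prob_space)
  have eq: "(\<lambda>\<omega>. (V L p \<omega>)\<^sup>2) = (\<lambda>\<omega>. (kk (X L (fst p) (snd p) \<omega>))\<^sup>2 - 2 * B (fst p) * kk (X L (fst p) (snd p) \<omega>) + (B (fst p))\<^sup>2)"
    unfolding V_def by (auto simp: power2_diff)
  show "integrable (M L) (\<lambda>\<omega>. (V L p \<omega>)\<^sup>2)" unfolding eq using W by simp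
  show "(\<integral>\<omega>. (V L p \<omega>)\<^sup>2 \<partial>M L) = A (fst p) - (B (fst p))\<^sup>2"
    unfolding eq using W by (simp add: prob_space power2_eq_square)
qed

lemma V_indep: "prob_space.indep_vars (M L) (\<lambda>_. borel) (V L) (IL L)"
proof -
  interpret prob_space "M L" by (rule M_prob)
  have "indep_vars (\<lambda>_. borel) (\<lambda>p \<omega>. (\<lambda>t. kk t - B (fst p)) ((\<lambda>(j, i). X L j i) p \<omega>)) ({1..n} \<times> {1..L})"
    by (rule indep_vars_compose2[OF X_indep]) simp
  then show ?thesis unfolding IL_def V_def[abs_def] by (simp add: split_beta)
qed

lemma sum_IL: "(\<Sum>i=1..L. \<Sum>j=1..n. F j i) = (\<Sum>p\<in>IL L. (F (fst p) (snd p) :: real))"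
proof -
  have "(\<Sum>i=1..L. \<Sum>j=1..n. F j i) = (\<Sum>j=1..n. \<Sum>i=1..L. F j i)" by (rule sum.swap)
  also have "\<dots> = (\<Sum>p\<in>{1..n} \<times> {1..L}. F (fst p) (snd p))"
    by (subst sum.cartesian_product) (simp add: split_beta)
  finally show ?thesis unfolding IL_def .
qed

lemma sum_IL_fst: "(\<Sum>p\<in>IL L. (G (fst p) :: real)) = real L * (\<Sum>j=1..n. G j)"
  using sum_IL[of "\<lambda>j i. G j" L] by (simp add: sum_distrib_left)

lemma pros_main:
  assumes L: "L \<ge> 1"
  defines "c \<equiv> 1 / (real n * real L * h)"
  shows "\<And>\<omega>. fhat_pros K h n L (X L) x \<omega> = c * (\<Sum>p\<in>IL L. V L p \<omega>) + B0 / h"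
    "expect (M L) (fhat_pros K h n L (X L) x) = B0 / h"
    "var (M L) (fhat_pros K h n L (X L) x) = c\<^sup>2 * (real L * \<sigma>2)"
proof -
  interpret prob_space "M L" by (rule M_prob)
  have cLn: "c * (real L * (real n * B0)) = B0 / h"
    using L n_pos h_pos unfolding c_def by (simp add: field_simps)
  show eq: "fhat_pros K h n L (X L) x \<omega> = c * (\<Sum>p\<in>IL L. V L p \<omega>) + B0 / h" for \<omega>
  proof -
    have "fhat_pros K h n L (X L) x \<omega> = c * (\<Sum>p\<in>IL L. kk (X L (fst p) (snd p) \<omega>))"
      unfolding fhat_pros_def c_def kk_def
      using sum_IL[of "\<lambda>j i. K ((x - X L j i \<omega>) / h)" L] by simp
    also have "\<dots> = c * (\<Sum>p\<in>IL L. V L p \<omega>) + c * (\<Sum>p\<in>IL L. B (fst p))"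
      unfolding V_def by (simp add: sum_subtractf algebra_simps)
    also have "c * (\<Sum>p\<in>IL L. B (fst p)) = B0 / h"
      using cLn sumB by (simp add: sum_IL_fst)
    finally show ?thesis .
  qed
  have intV: "integrable (M L) (\<lambda>\<omega>. \<Sum>p\<in>IL L. V L p \<omega>)"
    using V_facts by auto
  have EV: "(\<integral>\<omega>. (\<Sum>p\<in>IL L. V L p \<omega>) \<partial>M L) = 0"
    using V_facts by (simp add: Bochner_Integration.integral_sum)
  show E: "expect (M L) (fhat_pros K h n L (X L) x) = B0 / h"
    unfolding expect_def eq using intV EV by (simp add: prob_space)
  have VS: "integrable (M L) (\<lambda>\<omega>. (\<Sum>p\<in>IL L. V L p \<omega>)\<^sup>2) \<and>
    (\<integral>\<omega>. (\<Sum>p\<in>IL L. V L p \<omega>)\<^sup>2 \<partial>M L) = (\<Sum>p\<in>IL L. (\<integral>\<omega>. (V L p \<omega>)\<^sup>2 \<partial>M L))"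
    by (rule var_sum_indep[OF finite_IL V_indep]) (auto simp: V_facts)
  have "var (M L) (fhat_pros K h n L (X L) x) = (\<integral>\<omega>. c\<^sup>2 * (\<Sum>p\<in>IL L. V L p \<omega>)\<^sup>2 \<partial>M L)"
    unfolding var_def E unfolding eq by (simp add: power_mult_distrib expect_def)
  also have "\<dots> = c\<^sup>2 * (\<Sum>p\<in>IL L. A (fst p) - (B (fst p))\<^sup>2)"
    using VS V_facts by (simp add: expect_def)
  also have "\<dots> = c\<^sup>2 * (real L * \<sigma>2)"
    unfolding \<sigma>2_def using sum_IL_fst[of "\<lambda>j. A j - (B j)\<^sup>2" L] by simp
  finally show "var (M L) (fhat_pros K h n L (X L) x) = c\<^sup>2 * (real L * \<sigma>2)" .
qed

definition "U L k \<omega> = kk (Y L k \<omega>) - B0"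

lemma U_facts:
  assumes k: "k \<in> {1..n * L}"
  shows "integrable (M' L) (U L k)" "(\<integral>\<omega>. U L k \<omega> \<partial>M' L) = 0"
    "integrable (M' L) (\<lambda>\<omega>. (U L k \<omega>)\<^sup>2)"
    "(\<integral>\<omega>. (U L k \<omega>)\<^sup>2 \<partial>M' L) = A0 - B0\<^sup>2"
proof -
  interpret prob_space "M' L" by (rule M'_prob)
  have D: "distributed (M' L) lborel (Y L k) (\<lambda>t. ennreal (f t))" by (rule Y_distr[OF k])
  have [measurable]: "Y L k \<in> borel_measurable (M' L)" using D unfolding distributed_def by simp
  have nn: "\<And>t. t \<in> space lborel \<Longrightarrow> 0 \<le> f t" using f_nonneg by simp
  have W: "integrable (M' L) (\<lambda>\<omega>. kk (Y L k \<omega>))"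
    "(\<integral>\<omega>. kk (Y L k \<omega>) \<partial>M' L) = B0"
    "integrable (M' L) (\<lambda>\<omega>. (kk (Y L k \<omega>))\<^sup>2)"
    "(\<integral>\<omega>. (kk (Y L k \<omega>))\<^sup>2 \<partial>M' L) = A0"
    using distributed_integrable[OF D _ nn, of kk] int_fk
      distributed_integral[OF D _ nn, of kk]
      distributed_integrable[OF D _ nn, of "\<lambda>t. (kk t)\<^sup>2"] int_fk2
      distributed_integral[OF D _ nn, of "\<lambda>t. (kk t)\<^sup>2"]
    unfolding A0_def B0_def by simp_all
  show "integrable (M' L) (U L k)" unfolding U_def[abs_def] using W by simp
  show "(\<integral>\<omega>. U L k \<omega> \<partial>M' L) = 0" unfolding U_def using W by (simp add: prob_space)
  have eq: "(\<lambda>\<omega>. (U L k \<omega>)\<^sup>2) = (\<lambda>\<omega>. (kk (Y L k \<omega>))\<^sup>2 - 2 * B0 * kk (Y L k \<omega>) + B0\<^sup>2)"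
    unfolding U_def by (auto simp: power2_diff)
  show "integrable (M' L) (\<lambda>\<omega>. (U L k \<omega>)\<^sup>2)" unfolding eq using W by simp
  show "(\<integral>\<omega>. (U L k \<omega>)\<^sup>2 \<partial>M' L) = A0 - B0\<^sup>2"
    unfolding eq using W by (simp add: prob_space power2_eq_square)
qed

lemma U_indep: "prob_space.indep_vars (M' L) (\<lambda>_. borel) (U L) {1..n * L}"
proof -
  interpret prob_space "M' L" by (rule M'_prob)
  have "indep_vars (\<lambda>_. borel) (\<lambda>k \<omega>. (\<lambda>t. kk t - B0) (Y L k \<omega>)) {1..n * L}"
    by (rule indep_vars_compose2[OF Y_indep]) simp
  then show ?thesis unfolding U_def[abs_def] by simp
qed

lemma srs_main:
  assumes L: "L \<ge> 1"
  defines "c \<equiv> 1 / (real n * real L * h)"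
  shows "expect (M' L) (fhat_srs K h (n * L) (Y L) x) = B0 / h"
    "var (M' L) (fhat_srs K h (n * L) (Y L) x) = c\<^sup>2 * (real n * real L * (A0 - B0\<^sup>2))"
proof -
  interpret prob_space "M' L" by (rule M'_prob)
  have cLn: "c * (real n * real L * B0) = B0 / h"
    using L n_pos h_pos unfolding c_def by (simp add: field_simps)
  have eq: "fhat_srs K h (n * L) (Y L) x \<omega> = c * (\<Sum>k=1..n*L. U L k \<omega>) + B0 / h" for \<omega>
  proof -
    have "fhat_srs K h (n * L) (Y L) x \<omega> = c * (\<Sum>k=1..n*L. kk (Y L k \<omega>))"
      unfolding fhat_srs_def c_def kk_def by simp
    also have "\<dots> = c * (\<Sum>k=1..n*L. U L k \<omega>) + c * (real n * real L * B0)"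
      unfolding U_def by (simp add: sum_subtractf algebra_simps)
    finally show ?thesis using cLn by simp
  qed
  have intV: "integrable (M' L) (\<lambda>\<omega>. \<Sum>k=1..n*L. U L k \<omega>)"
    using U_facts by auto
  have EV: "(\<integral>\<omega>. (\<Sum>k=1..n*L. U L k \<omega>) \<partial>M' L) = 0"
    using U_facts by (simp add: Bochner_Integration.integral_sum)
  show E: "expect (M' L) (fhat_srs K h (n * L) (Y L) x) = B0 / h"
    unfolding expect_def eq using intV EV by (simp add: prob_space)
  have VS: "integrable (M' L) (\<lambda>\<omega>. (\<Sum>k\<in>{1..n*L}. U L k \<omega>)\<^sup>2) \<and>
    (\<integral>\<omega>. (\<Sum>k\<in>{1..n*L}. U L k \<omega>)\<^sup>2 \<partial>M' L) = (\<Sum>k\<in>{1..n*L}. (\<integral>\<omega>. (U L k \<omega>)\<^sup>2 \<partial>M' L))"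
    by (rule var_sum_indep[OF _ U_indep]) (auto simp: U_facts)
  have "var (M' L) (fhat_srs K h (n * L) (Y L) x) = (\<integral>\<omega>. c\<^sup>2 * (\<Sum>k=1..n*L. U L k \<omega>)\<^sup>2 \<partial>M' L)"
    unfolding var_def E unfolding eq by (simp add: power_mult_distrib expect_def)
  also have "\<dots> = c\<^sup>2 * (\<Sum>k\<in>{1..n*L}. A0 - B0\<^sup>2)"
    using VS U_facts by (simp add: expect_def)
  also have "\<dots> = c\<^sup>2 * (real n * real L * (A0 - B0\<^sup>2))"
    by simp
  finally show "var (M' L) (fhat_srs K h (n * L) (Y L) x) = c\<^sup>2 * (real n * real L * (A0 - B0\<^sup>2))" .
qed

lemma LINT_B: "(LINT t|lborel. (1 / h) * K ((x - t) / h) * pros_density f s n a j t) = B j / h"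
proof -
  have "(LINT t|lborel. (1 / h) * K ((x - t) / h) * pros_density f s n a j t)
     = (LINT t|lborel. (1 / h) * (g j t * kk t))"
    by (intro Bochner_Integration.integral_cong refl) (simp add: g_def kk_def)
  also have "\<dots> = B j / h" unfolding B_def by simp
  finally show ?thesis .
qed

lemma LINT_B0: "(LINT t|lborel. (1 / h) * K ((x - t) / h) * f t) = B0 / h"
proof -
  have "(LINT t|lborel. (1 / h) * K ((x - t) / h) * f t)
     = (LINT t|lborel. (1 / h) * (f t * kk t))"
    by (intro Bochner_Integration.integral_cong refl) (simp add: kk_def)
  also have "\<dots> = B0 / h" unfolding B0_def by simp
  finally show ?thesis .
qed

lemma sum_sq_dev: "(\<Sum>j=1..n. (B j / h - B0 / h)\<^sup>2) = ((\<Sum>j=1..n. (B j)\<^sup>2) - real n * B0\<^sup>2) / h\<^sup>2"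
proof -
  have "(\<Sum>j=1..n. (B j / h - B0 / h)\<^sup>2) = (\<Sum>j=1..n. ((B j)\<^sup>2 - 2 * B0 * B j + B0\<^sup>2) / h\<^sup>2)"
    using h_pos by (intro sum.cong refl) (simp add: power2_eq_square field_simps)
  also have "\<dots> = ((\<Sum>j=1..n. (B j)\<^sup>2) - 2 * B0 * (\<Sum>j=1..n. B j) + real n * B0\<^sup>2) / h\<^sup>2"
    by (simp add: sum_divide_distrib[symmetric] sum.distrib sum_subtractf sum_distrib_left)
  also have "\<dots> = ((\<Sum>j=1..n. (B j)\<^sup>2) - real n * B0\<^sup>2) / h\<^sup>2"
    using sumB by (simp add: power2_eq_square)
  finally show ?thesis .
qed

lemma parts12:
  "(\<forall>L\<ge>1.
        expect (M L) (fhat_pros K h n L (X L) x) = expect (M' L) (fhat_srs K h (n * L) (Y L) x)) \<and>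
     (\<forall>L\<ge>1.
        var (M L) (fhat_pros K h n L (X L) x) =
          var (M' L) (fhat_srs K h (n * L) (Y L) x)
          - 1 / (real (n * L) * real n) *
            (\<Sum>j=1..n. ((LINT t|lborel. (1 / h) * K ((x - t) / h) * pros_density f s n a j t)
                        - (LINT t|lborel. (1 / h) * K ((x - t) / h) * f t))\<^sup>2))"
proof (intro conjI allI impI)
  fix L :: nat assume L: "L \<ge> 1"
  show "expect (M L) (fhat_pros K h n L (X L) x) = expect (M' L) (fhat_srs K h (n * L) (Y L) x)"
    using pros_main(2)[OF L] srs_main(1)[OF L] by simp
  define S2 where "S2 = (\<Sum>j=1..n. (B j)\<^sup>2)"
  have s2: "\<sigma>2 = real n * A0 - S2"
    unfolding \<sigma>2_def S2_def using sumA by (simp add: sum_subtractf)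
  have Ln: "real L > 0" "real n > 0" using L n_pos by auto
  show "var (M L) (fhat_pros K h n L (X L) x) =
          var (M' L) (fhat_srs K h (n * L) (Y L) x)
          - 1 / (real (n * L) * real n) *
            (\<Sum>j=1..n. ((LINT t|lborel. (1 / h) * K ((x - t) / h) * pros_density f s n a j t)
                        - (LINT t|lborel. (1 / h) * K ((x - t) / h) * f t))\<^sup>2)"
    unfolding pros_main(3)[OF L] srs_main(2)[OF L] LINT_B LINT_B0 sum_sq_dev s2 S2_def[symmetric]
    using Ln h_pos by (simp add: field_simps power2_eq_square)
qed

definition "\<nu> j = distr (density lborel (\<lambda>t. ennreal (g j t))) borel (\<lambda>t. kk t - B j)"

lemma distr_V: "p \<in> IL L \<Longrightarrow> distr (M L) borel (V L p) = \<nu> (fst p)"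
proof -
  assume p: "p \<in> IL L"
  have j: "fst p \<in> {1..n}" and i: "snd p \<in> {1..L}" using p unfolding IL_def by auto
  have D: "distributed (M L) lborel (X L (fst p) (snd p)) (\<lambda>t. ennreal (g (fst p) t))"
    using X_distr[OF j i] unfolding g_def .
  have XM: "X L (fst p) (snd p) \<in> measurable (M L) lborel" using D unfolding distributed_def by simp
  have "distr (M L) borel (V L p) = distr (M L) borel ((\<lambda>t. kk t - B (fst p)) \<circ> X L (fst p) (snd p))"
    unfolding V_def[abs_def] comp_def by simp
  also have "\<dots> = distr (distr (M L) lborel (X L (fst p) (snd p))) borel (\<lambda>t. kk t - B (fst p))"
    using XM by (intro distr_distr[symmetric]) auto
  also have "\<dots> = \<nu> (fst p)"
    unfolding distributed_distr_eq_density[OF D] \<nu>_def ..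
  finally show ?thesis .
qed

lemma char_scaled:
  assumes "prob_space N" "Z \<in> borel_measurable N"
  shows "char (distr N borel (\<lambda>\<omega>. Z \<omega> / q)) t = char (distr N borel Z) (t / q)"
  using assms unfolding char_def by (simp add: integral_distr mult.commute)

lemma prod_IL_fst: "(\<Prod>p\<in>IL L. (G (fst p) :: complex)) = (\<Prod>j=1..n. G j) ^ L"
proof -
  have "(\<Prod>j=1..n. \<Prod>i=1..L. G j) = (\<Prod>p\<in>{1..n} \<times> {1..L}. G (fst p))"
    by (subst prod.cartesian_product) (simp add: split_beta)
  then have "(\<Prod>p\<in>{1..n} \<times> {1..L}. G (fst p)) = (\<Prod>j=1..n. \<Prod>i=1..L. G j)" by simp
  also have "\<dots> = (\<Prod>j=1..n. G j) ^ L" by (simp add: prod_power_distrib)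
  finally show ?thesis unfolding IL_def .
qed

lemma char_sumV:
  "char (distr (M L) borel (\<lambda>\<omega>. \<Sum>p\<in>IL L. V L p \<omega>)) u = (\<Prod>j=1..n. char (\<nu> j) u) ^ L"
proof -
  interpret prob_space "M L" by (rule M_prob)
  have "char (distr (M L) borel (\<lambda>\<omega>. \<Sum>p\<in>IL L. V L p \<omega>)) u = (\<Prod>p\<in>IL L. char (distr (M L) borel (V L p)) u)"
    by (rule char_distr_sum[OF V_indep])
  also have "\<dots> = (\<Prod>p\<in>IL L. char (\<nu> (fst p)) u)"
    by (intro prod.cong refl) (simp add: distr_V)
  finally show ?thesis using prod_IL_fst[of "\<lambda>j. char (\<nu> j) u" L] by simp
qed

lemma V_meas[measurable]: "p \<in> IL L \<Longrightarrow> V L p \<in> borel_measurable (M L)"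
  using V_facts(1) by (rule borel_measurable_integrable)

lemma part3:
  assumes pos: "\<forall>L\<ge>1. 0 < var (M L) (fhat_pros K h n L (X L) x)"
  shows "weak_conv_m
          (\<lambda>L. distr (M L) borel
             (\<lambda>\<omega>. (fhat_pros K h n L (X L) x \<omega> - expect (M L) (fhat_pros K h n L (X L) x))
                   / sqrt (var (M L) (fhat_pros K h n L (X L) x))))
          std_normal_distribution"
proof -
  have "0 < (1 / (real n * real 1 * h))\<^sup>2 * (real 1 * \<sigma>2)"
    using pos pros_main(3)[of 1] by auto
  then have s2pos: "\<sigma>2 > 0" by (simp add: zero_less_mult_iff)
  define \<mu> where "\<mu> = distr (M 1) borel (\<lambda>\<omega>. \<Sum>p\<in>IL 1. V 1 p \<omega>)"
  interpret M1: prob_space "M 1" by (rule M_prob)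
  have SM1[measurable]: "(\<lambda>\<omega>. \<Sum>p\<in>IL 1. V 1 p \<omega>) \<in> borel_measurable (M 1)"
    by (intro borel_measurable_sum V_meas)
  have VS: "integrable (M 1) (\<lambda>\<omega>. (\<Sum>p\<in>IL 1. V 1 p \<omega>)\<^sup>2) \<and>
    (\<integral>\<omega>. (\<Sum>p\<in>IL 1. V 1 p \<omega>)\<^sup>2 \<partial>M 1) = (\<Sum>p\<in>IL 1. (\<integral>\<omega>. (V 1 p \<omega>)\<^sup>2 \<partial>M 1))"
    by (rule M1.var_sum_indep[OF finite_IL V_indep]) (auto simp: V_facts)
  have intV: "integrable (M 1) (\<lambda>\<omega>. \<Sum>p\<in>IL 1. V 1 p \<omega>)"
    using V_facts by auto
  have EV: "(\<integral>\<omega>. (\<Sum>p\<in>IL 1. V 1 p \<omega>) \<partial>M 1) = 0"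
    using V_facts by (simp add: Bochner_Integration.integral_sum)
  have sq1: "(\<Sum>p\<in>IL 1. (\<integral>\<omega>. (V 1 p \<omega>)\<^sup>2 \<partial>M 1)) = \<sigma>2"
    using sum_IL_fst[of "\<lambda>j. A j - (B j)\<^sup>2" 1] V_facts(4) unfolding \<sigma>2_def
    by (simp cong: sum.cong)
  show ?thesis
  proof (rule clt_char[where \<mu>=\<mu> and \<sigma>="sqrt \<sigma>2"])
    show "real_distribution \<mu>" unfolding \<mu>_def by (rule M1.real_distribution_distr[OF SM1])
    show "integrable \<mu> (\<lambda>x. x)" unfolding \<mu>_def using intV by (simp add: integrable_distr_eq)
    show "(\<integral>x. x \<partial>\<mu>) = 0" unfolding \<mu>_def using EV by (simp add: integral_distr)
    show "integrable \<mu> (\<lambda>x. x^2)" unfolding \<mu>_def using VS by (simp add: integrable_distr_eq)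
    show "(\<integral>x. x^2 \<partial>\<mu>) = (sqrt \<sigma>2)\<^sup>2" unfolding \<mu>_def using VS sq1 s2pos by (simp add: integral_distr)
    show "sqrt \<sigma>2 > 0" using s2pos by simp
    show "real_distribution (distr (M L) borel
             (\<lambda>\<omega>. (fhat_pros K h n L (X L) x \<omega> - expect (M L) (fhat_pros K h n L (X L) x))
                   / sqrt (var (M L) (fhat_pros K h n L (X L) x))))" for L
    proof -
      interpret prob_space "M L" by (rule M_prob)
      have [measurable]: "fhat_pros K h n L (X L) x \<in> borel_measurable (M L)"
        unfolding fhat_pros_def by (intro borel_measurable_times borel_measurable_const borel_measurable_sum) auto
      show ?thesis by simp
    qed
    fix L :: nat and t :: real assume L: "L \<ge> 1"
    interpret prob_space "M L" by (rule M_prob)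
    define c where "c = 1 / (real n * real L * h)"
    have cpos: "c > 0" unfolding c_def using L n_pos h_pos by simp
    have fn: "(\<lambda>\<omega>. (fhat_pros K h n L (X L) x \<omega> - expect (M L) (fhat_pros K h n L (X L) x))
                   / sqrt (var (M L) (fhat_pros K h n L (X L) x))) =
          (\<lambda>\<omega>. (\<Sum>p\<in>IL L. V L p \<omega>) / sqrt (\<sigma>2 * real L))"
    proof
      fix \<omega>
      have "sqrt (var (M L) (fhat_pros K h n L (X L) x)) = c * sqrt (\<sigma>2 * real L)"
        unfolding pros_main(3)[OF L, folded c_def] using cpos
        by (simp add: real_sqrt_mult mult.commute)
      then show "(fhat_pros K h n L (X L) x \<omega> - expect (M L) (fhat_pros K h n L (X L) x))
                   / sqrt (var (M L) (fhat_pros K h n L (X L) x)) = (\<Sum>p\<in>IL L. V L p \<omega>) / sqrt (\<sigma>2 * real L)"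
        unfolding pros_main(2)[OF L] pros_main(1)[OF L, folded c_def] using cpos by simp
    qed
    have SM[measurable]: "(\<lambda>\<omega>. \<Sum>p\<in>IL L. V L p \<omega>) \<in> borel_measurable (M L)"
      by (intro borel_measurable_sum V_meas)
    have "char (distr (M L) borel (\<lambda>\<omega>. (\<Sum>p\<in>IL L. V L p \<omega>) / sqrt (\<sigma>2 * real L))) t
        = char (distr (M L) borel (\<lambda>\<omega>. \<Sum>p\<in>IL L. V L p \<omega>)) (t / sqrt (\<sigma>2 * real L))"
      by (rule char_scaled[OF M_prob SM])
    also have "\<dots> = (\<Prod>j=1..n. char (\<nu> j) (t / sqrt (\<sigma>2 * real L))) ^ L"
      by (rule char_sumV)
    also have "(\<Prod>j=1..n. char (\<nu> j) (t / sqrt (\<sigma>2 * real L))) = char \<mu> (t / sqrt ((sqrt \<sigma>2)\<^sup>2 * real L))"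
      unfolding \<mu>_def char_sumV using s2pos by simp
    finally show "char (distr (M L) borel
             (\<lambda>\<omega>. (fhat_pros K h n L (X L) x \<omega> - expect (M L) (fhat_pros K h n L (X L) x))
                   / sqrt (var (M L) (fhat_pros K h n L (X L) x)))) t = (char \<mu> (t / sqrt ((sqrt \<sigma>2)\<^sup>2 * real L))) ^ L"
      unfolding fn .
  qed
qed

end


theorem theorem3p1:
  fixes f K :: "real \<Rightarrow> real"
    and s n :: nat and a :: "nat \<Rightarrow> nat \<Rightarrow> real"
    and h x :: real
    and M :: "nat \<Rightarrow> 'a measure" and X :: "nat \<Rightarrow> nat \<Rightarrow> nat \<Rightarrow> 'a \<Rightarrow> real"
    and M' :: "nat \<Rightarrow> 'b measure" and Y :: "nat \<Rightarrow> nat \<Rightarrow> 'b \<Rightarrow> real"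
  assumes f_meas: "f \<in> borel_measurable lborel"
    and f_nonneg: "\<And>t. 0 \<le> f t"
    and f_int: "integrable lborel f"
    and f_one: "(LINT t|lborel. f t) = 1"
    and s_pos: "0 < s" and n_pos: "0 < n" and n_dvd: "n dvd s"
    and alpha: "doubly_stochastic n a"
    and K_int: "integrable lborel K"
    and K_one: "(LINT t|lborel. K t) = 1"
    and K_sym: "\<And>t. K (- t) = K t"
    and K_sq: "integrable lborel (\<lambda>t. (K t)\<^sup>2)"
    and K_mom2: "integrable lborel (\<lambda>t. t\<^sup>2 * K t)"
    and h_pos: "0 < h"
    and var_fin: "integrable lborel (\<lambda>t. (K ((x - t) / h))\<^sup>2 * f t)"
    and M_prob: "\<And>L. prob_space (M L)"
    and X_indep: "\<And>L. prob_space.indep_vars (M L) (\<lambda>_. borel) (\<lambda>(j, i). X L j i) ({1..n} \<times> {1..L})"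
    and X_distr: "\<And>L j i. j \<in> {1..n} \<Longrightarrow> i \<in> {1..L} \<Longrightarrow>
        distributed (M L) lborel (X L j i) (\<lambda>t. ennreal (pros_density f s n a j t))"
    and M'_prob: "\<And>L. prob_space (M' L)"
    and Y_indep: "\<And>L. prob_space.indep_vars (M' L) (\<lambda>_. borel) (Y L) {1..n * L}"
    and Y_distr: "\<And>L k. k \<in> {1..n * L} \<Longrightarrow> distributed (M' L) lborel (Y L k) (\<lambda>t. ennreal (f t))"
  shows
    "(\<forall>L\<ge>1.
        expect (M L) (fhat_pros K h n L (X L) x) = expect (M' L) (fhat_srs K h (n * L) (Y L) x)) \<and>
     (\<forall>L\<ge>1.
        var (M L) (fhat_pros K h n L (X L) x) =
          var (M' L) (fhat_srs K h (n * L) (Y L) x)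
          - 1 / (real (n * L) * real n) *
            (\<Sum>j=1..n. ((LINT t|lborel. (1 / h) * K ((x - t) / h) * pros_density f s n a j t)
                        - (LINT t|lborel. (1 / h) * K ((x - t) / h) * f t))\<^sup>2)) \<and>
     ((\<forall>L\<ge>1. 0 < var (M L) (fhat_pros K h n L (X L) x)) \<longrightarrow>
        weak_conv_m
          (\<lambda>L. distr (M L) borel
             (\<lambda>\<omega>. (fhat_pros K h n L (X L) x \<omega> - expect (M L) (fhat_pros K h n L (X L) x))
                   / sqrt (var (M L) (fhat_pros K h n L (X L) x))))
          std_normal_distribution)"
  proof -
  interpret pros_setting f K s n a h x M X M' Y
    by (rule pros_setting.intro) (fact assms)+
  show ?thesis using parts12 part3 by blast
qed

end
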